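(* Let $(N,M,W,C,P,\overline{Q})$ be an MRS-situation and $(N,M,v)$ the corresponding MRS-game. Then $(N,M,v)$ is balanced, i.e. its core is nonempty.
   Context: An MRS-situation $(N,M,W,C,P,\overline{Q})$ consists of a finite set $N$ of retailers and a finite set $M$ of suppliers (distinct agents), and: for each $j\in M$ a unit production cost $c_j:[0,\infty)\to(0,\infty)$, decreasing and continuous with $c_j(q)q$ nondecreasing, and a wholesale price $w_j:[0,\infty)\to(0,\infty)$, nonincreasing and continuous, with $w_j(q)>c_j(q)$ for all $q\ge0$ and $w_j(q)q$ nondecreasing; for each $i\in N$ a selling price $p_i:[0,\infty)\to\mathbb{R}$, nonincreasing and continuous, with $p_i(0)>w_j(0)$ for all $j$, and $q_i^*>0$ with $p_i(q_i^* )=0$; and capacities $\overline{q}_{ij}\in(0,\infty)$. For an order matrix $q=(q_{ij})_{i\in R,j\in M}\ge0$: $q_{Rj}=\sum_{i\in R}q_{ij}$, $q_{iM}=\sum_{j}q_{ij}$, $q_{RS}=\sum_{j\in S}\sum_{i\in R}q_{ij}$, $q_i=(q_{ij})_j$, $q_R=(q_{Rj})_j$; $c_S(x)=\min_{j\in S}c_j(x)$. For $i\in R$: $\Pi_i(q_i,\Psi^S(q_R))=p_i(q_{iM})q_{iM}-\sum_{j\in S}c_S(q_{RS})q_{ij}-\sum_{j\in M\setminus S}w_j(q_{Rj})q_{ij}$. $\mathbb{Q}^R=\{q\in\mathbb{R}_+^{R\times M}: q_{iM}\le q_i^*,\ q_{ij}\le\overline{q}_{ij}\}$; $q^{(R,S)}$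 is an optimal solution of $\max\{\sum_{i\in R}\Pi_i(q_i,\Psi^S(q_R)):q\in\mathbb{Q}^R\}$. The MRS-game is the TU-game on player set $N\cup M$ with $v(R,S)=\sum_{i\in R}\Pi_i(q_i^{(R,S)},\Psi^S(q_R^{(R,S)}))$ for $\emptyset\ne R\subseteq N$, $S\subseteq M$ (value of coalition $R\cup S$), and $v(\emptyset,S)=0$. Its core is $\{x\in\mathbb{R}^{N\cup M}: \sum_{k\in N\cup M}x_k=v(N,M),\ \sum_{k\in R\cup S}x_k\ge v(R,S)\ \forall R\subseteq N, S\subseteq M\}$. *)

theory Defs
  imports "HOL-Analysis.Analysis"
begin

text \<open>Retailers have type 'n, suppliers type 'm; players of the
  game are of type 'n + 'm (so retailers and suppliers are distinct agents).
  An order matrix is a function q :: 'n => 'm => real (only entries in R x M matter).\<close>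

definition mrs_situation ::
  "'n set \<Rightarrow> 'm set \<Rightarrow> ('m \<Rightarrow> real \<Rightarrow> real) \<Rightarrow> ('m \<Rightarrow> real \<Rightarrow> real)
   \<Rightarrow> ('n \<Rightarrow> real \<Rightarrow> real) \<Rightarrow> ('n \<Rightarrow> real) \<Rightarrow> ('n \<Rightarrow> 'm \<Rightarrow> real) \<Rightarrow> bool" where
  "mrs_situation N M w c p qstar qbar \<longleftrightarrow>
     finite N \<and> finite M \<and>
     (\<forall>j\<in>M.
        (\<forall>x\<ge>0. c j x > 0) \<and>
        (\<forall>x y. 0 \<le> x \<and> x < y \<longrightarrow> c j y < c j x) \<and>
        continuous_on {0..} (c j) \<and>
        (\<forall>x y. 0 \<le> x \<and> x \<le> y \<longrightarrow> c j x * x \<le> c j y * y) \<and>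
        (\<forall>x\<ge>0. w j x > 0) \<and>
        (\<forall>x y. 0 \<le> x \<and> x \<le> y \<longrightarrow> w j y \<le> w j x) \<and>
        continuous_on {0..} (w j) \<and>
        (\<forall>x\<ge>0. w j x > c j x) \<and>
        (\<forall>x y. 0 \<le> x \<and> x \<le> y \<longrightarrow> w j x * x \<le> w j y * y)) \<and>
     (\<forall>i\<in>N.
        (\<forall>x y. 0 \<le> x \<and> x \<le> y \<longrightarrow> p i y \<le> p i x) \<and>
        continuous_on {0..} (p i) \<and>
        (\<forall>j\<in>M. p i 0 > w j 0) \<and>
        qstar i > 0 \<and> p i (qstar i) = 0 \<and>
        (\<forall>j\<in>M. qbar i j > 0))"

definition cmin :: "('m \<Rightarrow> real \<Rightarrow> real) \<Rightarrow> 'm set \<Rightarrow> real \<Rightarrow> real" where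
  "cmin c S x = Min ((\<lambda>j. c j x) ` S)"

definition mrs_profit ::
  "'m set \<Rightarrow> ('m \<Rightarrow> real \<Rightarrow> real) \<Rightarrow> ('m \<Rightarrow> real \<Rightarrow> real) \<Rightarrow> ('n \<Rightarrow> real \<Rightarrow> real)
   \<Rightarrow> 'n set \<Rightarrow> 'm set \<Rightarrow> ('n \<Rightarrow> 'm \<Rightarrow> real) \<Rightarrow> 'n \<Rightarrow> real" where
  "mrs_profit M w c p R S q i =
     p i (\<Sum>j\<in>M. q i j) * (\<Sum>j\<in>M. q i j)
     - (\<Sum>j\<in>S. cmin c S (\<Sum>j'\<in>S. \<Sum>i'\<in>R. q i' j') * q i j)
     - (\<Sum>j\<in>M - S. w j (\<Sum>i'\<in>R. q i' j) * q i j)"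

definition mrs_feasible ::
  "'m set \<Rightarrow> ('n \<Rightarrow> real) \<Rightarrow> ('n \<Rightarrow> 'm \<Rightarrow> real) \<Rightarrow> 'n set \<Rightarrow> ('n \<Rightarrow> 'm \<Rightarrow> real) \<Rightarrow> bool" where
  "mrs_feasible M qstar qbar R q \<longleftrightarrow>
     (\<forall>i\<in>R. \<forall>j\<in>M. 0 \<le> q i j \<and> q i j \<le> qbar i j) \<and>
     (\<forall>i\<in>R. (\<Sum>j\<in>M. q i j) \<le> qstar i)"

text \<open>v(R,S): the optimal value of the joint profit maximisation problem
  (an optimal solution exists, so the supremum is the maximum); v(\<emptyset>,S) = 0.\<close>
definition mrs_value ::
  "'m set \<Rightarrow> ('m \<Rightarrow> real \<Rightarrow> real) \<Rightarrow> ('m \<Rightarrow> real \<Rightarrow> real) \<Rightarrow> ('n \<Rightarrow> real \<Rightarrow> real)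
   \<Rightarrow> ('n \<Rightarrow> real) \<Rightarrow> ('n \<Rightarrow> 'm \<Rightarrow> real) \<Rightarrow> 'n set \<Rightarrow> 'm set \<Rightarrow> real" where
  "mrs_value M w c p qstar qbar R S =
     (if R = {} then 0
      else Sup ((\<lambda>q. \<Sum>i\<in>R. mrs_profit M w c p R S q i) ` {q. mrs_feasible M qstar qbar R q}))"

definition mrs_core ::
  "'n set \<Rightarrow> 'm set \<Rightarrow> ('n set \<Rightarrow> 'm set \<Rightarrow> real) \<Rightarrow> ('n + 'm \<Rightarrow> real) set" where
  "mrs_core N M v = {x.
     (\<Sum>k\<in>Inl ` N \<union> Inr ` M. x k) = v N M \<and>
     (\<forall>R S. R \<subseteq> N \<and> S \<subseteq> M \<longrightarrow> (\<Sum>k\<in>Inl ` R \<union> Inr ` S. x k) \<ge> v R S)}"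

end

theory Submission
  imports Defs
begin

locale mrs =
  fixes N :: "'n set" and M :: "'m set"
    and w c :: "'m \<Rightarrow> real \<Rightarrow> real" and p :: "'n \<Rightarrow> real \<Rightarrow> real"
    and qstar :: "'n \<Rightarrow> real" and qbar :: "'n \<Rightarrow> 'm \<Rightarrow> real"
  assumes sit: "mrs_situation N M w c p qstar qbar"
begin

lemma finN: "finite N" and finM: "finite M"
  using sit unfolding mrs_situation_def by auto

lemma c_pos: "j \<in> M \<Longrightarrow> 0 \<le> x \<Longrightarrow> c j x > 0"
  using sit unfolding mrs_situation_def by auto

lemma c_mono: assumes "j \<in> M" "0 \<le> x" "x \<le> y" shows "c j y \<le> c j x"
proof (cases "x = y")
  case False
  then have "x < y" using assms by auto
  then show ?thesis using sit assms unfolding mrs_situation_def by (meson less_imp_le)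
qed simp

lemma w_gt: "j \<in> M \<Longrightarrow> 0 \<le> x \<Longrightarrow> w j x > c j x"
  using sit unfolding mrs_situation_def by auto

lemma p_mono: "i \<in> N \<Longrightarrow> 0 \<le> x \<Longrightarrow> x \<le> y \<Longrightarrow> p i y \<le> p i x"
  using sit unfolding mrs_situation_def by auto

lemma qstar_pos: "i \<in> N \<Longrightarrow> qstar i > 0"
  using sit unfolding mrs_situation_def by auto

lemma p_qstar: "i \<in> N \<Longrightarrow> p i (qstar i) = 0"
  using sit unfolding mrs_situation_def by auto

definition rowset :: "'n \<Rightarrow> ('m \<Rightarrow> real) set" where
  "rowset i = {r. (\<forall>j\<in>M. 0 \<le> r j \<and> r j \<le> qbar i j) \<and> sum r M \<le> qstar i}"

definition gv :: "'n \<Rightarrow> real \<Rightarrow> ('m \<Rightarrow> real) \<Rightarrow> real" where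
  "gv i \<pi> r = p i (sum r M) * sum r M - \<pi> * sum r M"

definition hv :: "'n \<Rightarrow> real \<Rightarrow> real" where
  "hv i \<pi> = Sup (gv i \<pi> ` rowset i)"

lemma zero_row: "i \<in> N \<Longrightarrow> (\<lambda>j. 0) \<in> rowset i"
  using qstar_pos[of i] unfolding rowset_def using sit unfolding mrs_situation_def
  by (auto intro: less_imp_le)

lemma row_nonneg: "r \<in> rowset i \<Longrightarrow> 0 \<le> sum r M"
  unfolding rowset_def by (auto intro: sum_nonneg)

lemma row_le: "r \<in> rowset i \<Longrightarrow> sum r M \<le> qstar i"
  unfolding rowset_def by auto

lemma rev_le: assumes "i \<in> N" "0 \<le> x" shows "p i x * x \<le> \<bar>p i 0\<bar> * x"
proof -
  have "p i x \<le> p i 0" using p_mono[OF assms(1) order_refl assms(2)] .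
  then show ?thesis using assms(2) by (meson abs_ge_self mult_right_mono order_trans)
qed

lemma gv_bound: assumes "i \<in> N" "r \<in> rowset i"
  shows "gv i \<pi> r \<le> \<bar>p i 0\<bar> * qstar i + \<bar>\<pi>\<bar> * qstar i"
proof -
  let ?x = "sum r M"
  have x0: "0 \<le> ?x" and xq: "?x \<le> qstar i" using row_nonneg[OF assms(2)] row_le[OF assms(2)] by auto
  have "p i ?x * ?x \<le> \<bar>p i 0\<bar> * ?x" using rev_le[OF assms(1) x0] .
  also have "\<dots> \<le> \<bar>p i 0\<bar> * qstar i" using xq by (simp add: mult_left_mono)
  finally have a: "p i ?x * ?x \<le> \<bar>p i 0\<bar> * qstar i" .
  have "- \<pi> * ?x \<le> \<bar>\<pi>\<bar> * qstar i"
  proof -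
    have "- \<pi> * ?x \<le> \<bar>\<pi>\<bar> * ?x" using x0 by (intro mult_right_mono) auto
    also have "\<dots> \<le> \<bar>\<pi>\<bar> * qstar i" using xq by (simp add: mult_left_mono)
    finally show ?thesis .
  qed
  then show ?thesis using a unfolding gv_def by linarith
qed

lemma gv_bdd: "i \<in> N \<Longrightarrow> bdd_above (gv i \<pi> ` rowset i)"
  using gv_bound by (meson bdd_aboveI2)

lemma gv_le_hv: "i \<in> N \<Longrightarrow> r \<in> rowset i \<Longrightarrow> gv i \<pi> r \<le> hv i \<pi>"
  unfolding hv_def by (rule cSUP_upper) (auto intro: gv_bdd)

lemma hv_approx: assumes "i \<in> N" "e > 0" shows "\<exists>r\<in>rowset i. gv i \<pi> r > hv i \<pi> - e"
proof (rule ccontr)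
  assume "\<not> ?thesis"
  then have "\<forall>r\<in>rowset i. gv i \<pi> r \<le> hv i \<pi> - e" by auto
  then have "hv i \<pi> \<le> hv i \<pi> - e" unfolding hv_def[of i \<pi>]
    using zero_row[OF assms(1)] by (intro cSUP_least) (auto simp: hv_def)
  then show False using assms(2) by simp
qed

lemma hv_lip: assumes "i \<in> N" shows "hv i \<pi> \<le> hv i \<pi>' + qstar i * \<bar>\<pi> - \<pi>'\<bar>"
  unfolding hv_def[of i \<pi>]
proof (rule cSUP_least)
  show "rowset i \<noteq> {}" using zero_row[OF assms] by auto
next
  fix r assume r: "r \<in> rowset i"
  have x0: "0 \<le> sum r M" and xq: "sum r M \<le> qstar i" using row_nonneg[OF r] row_le[OF r] by auto
  have "(\<pi>' - \<pi>) * sum r M \<le> \<bar>\<pi> - \<pi>'\<bar> * sum r M" using x0 by (simp add: mult_right_mono)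
  also have "\<dots> \<le> \<bar>\<pi> - \<pi>'\<bar> * qstar i" using xq by (simp add: mult_left_mono)
  finally have "gv i \<pi> r \<le> gv i \<pi>' r + qstar i * \<bar>\<pi> - \<pi>'\<bar>"
    unfolding gv_def by (simp add: algebra_simps)
  also have "\<dots> \<le> hv i \<pi>' + qstar i * \<bar>\<pi> - \<pi>'\<bar>" using gv_le_hv[OF assms r] by simp
  finally show "gv i \<pi> r \<le> hv i \<pi>' + qstar i * \<bar>\<pi> - \<pi>'\<bar>" .
qed

lemma hv_cont: assumes "i \<in> N" shows "continuous_on X (hv i)"
proof (rule lipschitz_on_continuous_on)
  show "(qstar i)-lipschitz_on X (hv i)"
  proof (rule lipschitz_onI)
    fix x y
    have "hv i x \<le> hv i y + qstar i * \<bar>x - y\<bar>" using hv_lip[OF assms] .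
    moreover have "hv i y \<le> hv i x + qstar i * \<bar>y - x\<bar>" using hv_lip[OF assms] .
    ultimately show "dist (hv i x) (hv i y) \<le> qstar i * dist x y"
      by (simp add: dist_real_def abs_minus_commute abs_le_iff)
  qed (use qstar_pos[OF assms] in auto)
qed

lemma hv_large: assumes "i \<in> N" "\<bar>p i 0\<bar> \<le> P" shows "hv i P = 0"
proof (rule antisym)
  show "hv i P \<le> 0" unfolding hv_def
  proof (rule cSUP_least)
    show "rowset i \<noteq> {}" using zero_row[OF assms(1)] by auto
  next
    fix r assume r: "r \<in> rowset i"
    have x0: "0 \<le> sum r M" using row_nonneg[OF r] .
    have "p i (sum r M) * sum r M \<le> \<bar>p i 0\<bar> * sum r M" using rev_le[OF assms(1) x0] .
    also have "\<dots> \<le> P * sum r M" using assms(2) x0 by (simp add: mult_right_mono)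
    finally show "gv i P r \<le> 0" unfolding gv_def by simp
  qed
next
  have "gv i P (\<lambda>j. 0) = 0" unfolding gv_def by simp
  then show "0 \<le> hv i P" using gv_le_hv[OF assms(1) zero_row[OF assms(1)], of P] by simp
qed

lemma cmin_le: "finite S \<Longrightarrow> j \<in> S \<Longrightarrow> cmin c S x \<le> c j x"
  unfolding cmin_def by (rule Min_le) auto

lemma cmin_in: "finite S \<Longrightarrow> S \<noteq> {} \<Longrightarrow> \<exists>k\<in>S. cmin c S x = c k x"
  proof -
  assume a: "finite S" "S \<noteq> {}"
  have "Min ((\<lambda>j. c j x) ` S) \<in> (\<lambda>j. c j x) ` S" using a by (intro Min_in) auto
  then show ?thesis unfolding cmin_def by auto
qed

lemma cm_mono: assumes "M \<noteq> {}" "0 \<le> x" "x \<le> y" shows "cmin c M y \<le> cmin c M x"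
proof -
  obtain k where k: "k \<in> M" "cmin c M x = c k x" using cmin_in[OF finM assms(1)] by blast
  have "cmin c M y \<le> c k y" using cmin_le[OF finM k(1)] .
  also have "\<dots> \<le> c k x" using c_mono[OF k(1) assms(2,3)] .
  finally show ?thesis using k by simp
qed

lemma cm_pos: assumes "M \<noteq> {}" "0 \<le> x" shows "cmin c M x > 0"
proof -
  obtain k where k: "k \<in> M" "cmin c M x = c k x" using cmin_in[OF finM assms(1)] by blast
  then show ?thesis using c_pos[OF k(1) assms(2)] by simp
qed

definition Qt :: "'n set \<Rightarrow> ('n \<Rightarrow> 'm \<Rightarrow> real) \<Rightarrow> real" where
  "Qt R q = (\<Sum>j\<in>M. \<Sum>i\<in>R. q i j)"

lemma Qt_swap: "Qt R q = (\<Sum>i\<in>R. sum (q i) M)"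
  unfolding Qt_def by (rule sum.swap)

lemma feas_row: "mrs_feasible M qstar qbar R q \<Longrightarrow> i \<in> R \<Longrightarrow> q i \<in> rowset i"
  unfolding mrs_feasible_def rowset_def by auto

lemma feas_nonneg: "mrs_feasible M qstar qbar R q \<Longrightarrow> i \<in> R \<Longrightarrow> j \<in> M \<Longrightarrow> 0 \<le> q i j"
  unfolding mrs_feasible_def by auto

lemma profit_NM: "mrs_profit M w c p N M q i
   = p i (sum (q i) M) * sum (q i) M - cmin c M (Qt N q) * sum (q i) M"
  unfolding mrs_profit_def Qt_def by (simp add: sum_distrib_right mult.commute)

lemma profit_le:
  assumes R: "R \<subseteq> N" and S: "S \<subseteq> M" and q: "mrs_feasible M qstar qbar R q" and i: "i \<in> R"
    and fR: "finite R"
  shows "mrs_profit M w c p R S q i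
     \<le> p i (sum (q i) M) * sum (q i) M - cmin c M (Qt R q) * sum (q i) M"
proof -
  let ?Q = "Qt R q"
  have nn: "\<And>i j. i \<in> R \<Longrightarrow> j \<in> M \<Longrightarrow> 0 \<le> q i j" using feas_nonneg[OF q] by blast
  have Q0: "0 \<le> ?Q" unfolding Qt_def using nn by (auto intro!: sum_nonneg)
  have colle: "(\<Sum>i'\<in>R. q i' j) \<le> ?Q" if j: "j \<in> M" for j
    unfolding Qt_def using j finM nn
    by (intro member_le_sum) (auto intro!: sum_nonneg)
  have col0: "0 \<le> (\<Sum>i'\<in>R. q i' j)" if j: "j \<in> M" for j
    using j nn by (auto intro!: sum_nonneg)
  have X0: "0 \<le> (\<Sum>j'\<in>S. \<Sum>i'\<in>R. q i' j')" by (rule sum_nonneg) (use S col0 in auto)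
  have XQ: "(\<Sum>j'\<in>S. \<Sum>i'\<in>R. q i' j') \<le> ?Q"
    unfolding Qt_def using S finM col0 by (intro sum_mono2) auto
  have fS: "finite S" using S finM finite_subset by blast
  have A: "cmin c M ?Q * q i j \<le> cmin c S (\<Sum>j'\<in>S. \<Sum>i'\<in>R. q i' j') * q i j" if j: "j \<in> S" for j
  proof -
    have "S \<noteq> {}" using j by auto
    then obtain k where k: "k \<in> S" "cmin c S (\<Sum>j'\<in>S. \<Sum>i'\<in>R. q i' j') = c k (\<Sum>j'\<in>S. \<Sum>i'\<in>R. q i' j')"
      using cmin_in[OF fS] by blast
    have kM: "k \<in> M" using k S by auto
    have "cmin c M ?Q \<le> c k ?Q" using cmin_le[OF finM kM] .
    also have "\<dots> \<le> c k (\<Sum>j'\<in>S. \<Sum>i'\<in>R. q i' j')" using c_mono[OF kM X0 XQ] .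
    finally show ?thesis using k nn[OF i] j S by (intro mult_right_mono) auto
  qed
  have B: "cmin c M ?Q * q i j \<le> w j (\<Sum>i'\<in>R. q i' j) * q i j" if j: "j \<in> M - S" for j
  proof -
    have jM: "j \<in> M" using j by auto
    have "cmin c M ?Q \<le> c j ?Q" using cmin_le[OF finM jM] .
    also have "\<dots> \<le> c j (\<Sum>i'\<in>R. q i' j)" using c_mono[OF jM col0[OF jM] colle[OF jM]] .
    also have "\<dots> \<le> w j (\<Sum>i'\<in>R. q i' j)" using w_gt[OF jM col0[OF jM]] by simp
    finally show ?thesis using nn[OF i jM] by (intro mult_right_mono) auto
  qed
  have "cmin c M ?Q * sum (q i) M = (\<Sum>j\<in>M. cmin c M ?Q * q i j)" by (simp add: sum_distrib_left)
  also have "\<dots> = (\<Sum>j\<in>M - S. cmin c M ?Q * q i j) + (\<Sum>j\<in>S. cmin c M ?Q * q i j)"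
    using sum.subset_diff[OF S finM] .
  also have "\<dots> \<le> (\<Sum>j\<in>M - S. w j (\<Sum>i'\<in>R. q i' j) * q i j)
      + (\<Sum>j\<in>S. cmin c S (\<Sum>j'\<in>S. \<Sum>i'\<in>R. q i' j') * q i j)"
    using A B by (intro add_mono sum_mono) auto
  finally show ?thesis unfolding mrs_profit_def by linarith
qed


definition FS :: "'n set \<Rightarrow> ('n \<Rightarrow> 'm \<Rightarrow> real) set" where
  "FS R = {q. mrs_feasible M qstar qbar R q}"

definition val :: "'n set \<Rightarrow> 'm set \<Rightarrow> ('n \<Rightarrow> 'm \<Rightarrow> real) \<Rightarrow> real" where
  "val R S q = (\<Sum>i\<in>R. mrs_profit M w c p R S q i)"

lemma v_Sup: "R \<noteq> {} \<Longrightarrow> mrs_value M w c p qstar qbar R S = (SUP q\<in>FS R. val R S q)"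
  unfolding mrs_value_def FS_def val_def by simp

lemma feas0: "R \<subseteq> N \<Longrightarrow> (\<lambda>i j. 0) \<in> FS R"
proof -
  assume R: "R \<subseteq> N"
  have "\<forall>i\<in>R. \<forall>j\<in>M. 0 \<le> qbar i j" using R sit unfolding mrs_situation_def
    by (meson less_imp_le subsetD)
  moreover have "\<forall>i\<in>R. 0 \<le> qstar i" using R qstar_pos by (meson less_imp_le subsetD)
  ultimately show ?thesis unfolding FS_def mrs_feasible_def by simp
qed

lemma val_le:
  assumes R: "R \<subseteq> N" and S: "S \<subseteq> M" and q: "q \<in> FS R"
  shows "val R S q \<le> (\<Sum>i\<in>R. p i (sum (q i) M) * sum (q i) M) - cmin c M (Qt R q) * Qt R q"
proof -
  have fR: "finite R" using R finN finite_subset by blast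
  have "val R S q \<le> (\<Sum>i\<in>R. p i (sum (q i) M) * sum (q i) M - cmin c M (Qt R q) * sum (q i) M)"
    unfolding val_def using profit_le[OF R S _ _ fR] q unfolding FS_def by (intro sum_mono) auto
  also have "\<dots> = (\<Sum>i\<in>R. p i (sum (q i) M) * sum (q i) M) - cmin c M (Qt R q) * Qt R q"
    by (simp add: sum_subtractf sum_distrib_left Qt_swap)
  finally show ?thesis .
qed

lemma Qt_nonneg: "q \<in> FS R \<Longrightarrow> 0 \<le> Qt R q"
  unfolding Qt_def FS_def mrs_feasible_def by (auto intro!: sum_nonneg)

lemma cmQ_nonneg: assumes "q \<in> FS R" shows "0 \<le> cmin c M (Qt R q) * Qt R q"
proof (cases "M = {}")
  case True show ?thesis unfolding Qt_def using True by simp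
next
  case False
  then show ?thesis using cm_pos[OF False Qt_nonneg[OF assms]] Qt_nonneg[OF assms] by simp
qed

lemma rev_sum_le: assumes R: "R \<subseteq> N" and q: "q \<in> FS R"
  shows "(\<Sum>i\<in>R. p i (sum (q i) M) * sum (q i) M) \<le> (\<Sum>i\<in>R. \<bar>p i 0\<bar> * qstar i)"
proof (rule sum_mono)
  fix i assume i: "i \<in> R"
  have r: "q i \<in> rowset i" using feas_row q i unfolding FS_def by auto
  have "p i (sum (q i) M) * sum (q i) M \<le> \<bar>p i 0\<bar> * sum (q i) M"
    using rev_le[of i] i R row_nonneg[OF r] by auto
  also have "\<dots> \<le> \<bar>p i 0\<bar> * qstar i" using row_le[OF r] by (simp add: mult_left_mono)
  finally show "p i (sum (q i) M) * sum (q i) M \<le> \<bar>p i 0\<bar> * qstar i" .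
qed

lemma val_bdd: assumes R: "R \<subseteq> N" and S: "S \<subseteq> M" shows "bdd_above (val R S ` FS R)"
proof (rule bdd_aboveI2)
  fix q assume q: "q \<in> FS R"
  show "val R S q \<le> (\<Sum>i\<in>R. \<bar>p i 0\<bar> * qstar i)"
    using val_le[OF R S q] cmQ_nonneg[OF q] rev_sum_le[OF R q] by linarith
qed


lemma key:
  assumes R: "R \<subseteq> N" and Rne: "R \<noteq> {}" and S: "S \<subseteq> M"
    and gt: "mrs_value M w c p qstar qbar R S > (\<Sum>i\<in>R. hv i \<pi>)"
  shows "mrs_value M w c p qstar qbar N M > (\<Sum>i\<in>N. hv i \<pi>)"
proof -
  have fR: "finite R" using R finN finite_subset by blast
  have "(\<Sum>i\<in>R. hv i \<pi>) < (SUP q\<in>FS R. val R S q)" using gt v_Sup[OF Rne] by simp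
  then obtain q where q: "q \<in> FS R" and gtq: "(\<Sum>i\<in>R. hv i \<pi>) < val R S q"
    using less_cSUP_iff[OF _ val_bdd[OF R S]] feas0[OF R] by blast
  define e where "e = val R S q - (\<Sum>i\<in>R. hv i \<pi>)"
  have e0: "e > 0" using gtq e_def by simp
  define Q where "Q = Qt R q"
  have Q0: "0 \<le> Q" using Qt_nonneg[OF q] Q_def by simp
  have le1: "val R S q \<le> (\<Sum>i\<in>R. p i (sum (q i) M) * sum (q i) M) - cmin c M Q * Q"
    using val_le[OF R S q] Q_def by simp
  have le2: "(\<Sum>i\<in>R. p i (sum (q i) M) * sum (q i) M) - \<pi> * Q \<le> (\<Sum>i\<in>R. hv i \<pi>)"
  proof -
    have "(\<Sum>i\<in>R. p i (sum (q i) M) * sum (q i) M) - \<pi> * Q = (\<Sum>i\<in>R. gv i \<pi> (q i))"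
      unfolding gv_def Q_def Qt_swap by (simp add: sum_subtractf sum_distrib_left)
    also have "\<dots> \<le> (\<Sum>i\<in>R. hv i \<pi>)"
    proof (rule sum_mono)
      fix i assume i: "i \<in> R"
      have "q i \<in> rowset i" using feas_row[of R q i] q i unfolding FS_def by blast
      then show "gv i \<pi> (q i) \<le> hv i \<pi>" using gv_le_hv[of i] i R by blast
    qed
    finally show ?thesis .
  qed
  have "(\<pi> - cmin c M Q) * Q = \<pi> * Q - cmin c M Q * Q" by (simp add: algebra_simps)
  then have "(\<pi> - cmin c M Q) * Q > 0" using le1 le2 gtq by linarith
  then have Qpos: "Q > 0" and cmpi: "cmin c M Q < \<pi>" using Q0 by (auto simp: zero_less_mult_iff)
  have Mne: "M \<noteq> {}"
  proof
    assume "M = {}" then have "Q = 0" unfolding Q_def Qt_def by simp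
    then show False using Qpos by simp
  qed
  define d where "d = e / (real (card N) + 1)"
  have d0: "d > 0" using e0 d_def by simp
  have ex: "\<forall>i\<in>N - R. \<exists>r. r \<in> rowset i \<and> gv i \<pi> r > hv i \<pi> - d"
    using hv_approx d0 by blast
  obtain r where r0: "\<forall>i\<in>N - R. r i \<in> rowset i \<and> gv i \<pi> (r i) > hv i \<pi> - d"
    using bchoice[OF ex] by blast
  have r: "r i \<in> rowset i \<and> gv i \<pi> (r i) > hv i \<pi> - d" if "i \<in> N - R" for i
    using r0 that by blast
  define q' where "q' = (\<lambda>i. if i \<in> R then q i else r i)"
  have rows: "q' i \<in> rowset i" if i: "i \<in> N" for i
  proof (cases "i \<in> R")
    case True
    then have "q i \<in> rowset i" using feas_row[of R q i] q unfolding FS_def by blast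
    then show ?thesis unfolding q'_def using True by simp
  next
    case False
    then have "r i \<in> rowset i" using r[of i] i by blast
    then show ?thesis unfolding q'_def using False by simp
  qed
  have q'F: "q' \<in> FS N"
    using rows unfolding FS_def mrs_feasible_def rowset_def by blast
  define Q' where "Q' = Qt N q'"
  have Q'split: "Q' = Q + (\<Sum>i\<in>N - R. sum (r i) M)"
  proof -
    have "Q' = (\<Sum>i\<in>N - R. sum (q' i) M) + (\<Sum>i\<in>R. sum (q' i) M)"
      unfolding Q'_def Qt_swap using sum.subset_diff[OF R finN] .
    also have "\<dots> = (\<Sum>i\<in>N - R. sum (r i) M) + Q"
    proof -
      have "(\<Sum>i\<in>N - R. sum (q' i) M) = (\<Sum>i\<in>N - R. sum (r i) M)"
        by (rule sum.cong) (auto simp: q'_def)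
      moreover have "(\<Sum>i\<in>R. sum (q' i) M) = Q"
        unfolding Q_def Qt_swap by (rule sum.cong) (auto simp: q'_def)
      ultimately show ?thesis by simp
    qed
    finally show ?thesis by simp
  qed
  have rnn: "(\<Sum>i\<in>N - R. sum (r i) M) \<ge> 0"
  proof (rule sum_nonneg)
    fix i assume "i \<in> N - R"
    then show "0 \<le> sum (r i) M" using r[of i] row_nonneg by blast
  qed
  have QQ': "Q \<le> Q'" using Q'split rnn by simp
  have cm': "cmin c M Q' \<le> cmin c M Q" using cm_mono[OF Mne Q0 QQ'] .
  have "mrs_value M w c p qstar qbar N M \<ge> val N M q'"
  proof -
    have Nne: "N \<noteq> {}" using R Rne by auto
    show ?thesis unfolding v_Sup[OF Nne]
      by (rule cSUP_upper[OF q'F val_bdd[OF order_refl order_refl]])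
  qed
  moreover have "val N M q' = (\<Sum>i\<in>N - R. p i (sum (r i) M) * sum (r i) M - cmin c M Q' * sum (r i) M)
      + (\<Sum>i\<in>R. p i (sum (q i) M) * sum (q i) M - cmin c M Q' * sum (q i) M)"
  proof -
    have "val N M q' = (\<Sum>i\<in>N. p i (sum (q' i) M) * sum (q' i) M - cmin c M Q' * sum (q' i) M)"
      unfolding val_def profit_NM Q'_def ..
    also have "\<dots> = (\<Sum>i\<in>N - R. p i (sum (q' i) M) * sum (q' i) M - cmin c M Q' * sum (q' i) M)
      + (\<Sum>i\<in>R. p i (sum (q' i) M) * sum (q' i) M - cmin c M Q' * sum (q' i) M)"
      using sum.subset_diff[OF R finN] .
    finally show ?thesis unfolding q'_def by simp
  qed
  moreover have "(\<Sum>i\<in>R. p i (sum (q i) M) * sum (q i) M - cmin c M Q' * sum (q i) M)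
      \<ge> (\<Sum>i\<in>R. p i (sum (q i) M) * sum (q i) M) - cmin c M Q * Q"
  proof -
    have "(\<Sum>i\<in>R. p i (sum (q i) M) * sum (q i) M - cmin c M Q' * sum (q i) M)
       = (\<Sum>i\<in>R. p i (sum (q i) M) * sum (q i) M) - cmin c M Q' * Q"
      unfolding Q_def Qt_swap by (simp add: sum_subtractf sum_distrib_left)
    moreover have "cmin c M Q' * Q \<le> cmin c M Q * Q" using cm' Q0 by (simp add: mult_right_mono)
    ultimately show ?thesis by simp
  qed
  moreover have "(\<Sum>i\<in>N - R. p i (sum (r i) M) * sum (r i) M - cmin c M Q' * sum (r i) M)
      \<ge> (\<Sum>i\<in>N - R. hv i \<pi> - d)"
  proof (rule sum_mono)
    fix i assume i: "i \<in> N - R"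
    have "cmin c M Q' * sum (r i) M \<le> \<pi> * sum (r i) M"
      using cm' cmpi row_nonneg[of "r i" i] r[OF i] by (intro mult_right_mono) auto
    then show "hv i \<pi> - d \<le> p i (sum (r i) M) * sum (r i) M - cmin c M Q' * sum (r i) M"
      using r[OF i] unfolding gv_def by linarith
  qed
  moreover have "(\<Sum>i\<in>N - R. hv i \<pi> - d) = (\<Sum>i\<in>N - R. hv i \<pi>) - real (card (N - R)) * d"
    by (simp add: sum_subtractf)
  moreover have "real (card (N - R)) * d < e"
  proof -
    have "card (N - R) \<le> card N" using finN by (simp add: card_mono)
    then have "real (card (N - R)) * d \<le> real (card N) * d" using d0 by (simp add: mult_right_mono)
    also have "\<dots> < (real (card N) + 1) * d" using d0 by (simp add: algebra_simps)
    also have "\<dots> = e" unfolding d_def by simp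
    finally show ?thesis .
  qed
  moreover have "(\<Sum>i\<in>N. hv i \<pi>) = (\<Sum>i\<in>N - R. hv i \<pi>) + (\<Sum>i\<in>R. hv i \<pi>)"
    using sum.subset_diff[OF R finN] .
  ultimately show ?thesis using le1 e_def by linarith
qed


lemma sum_split:
  fixes x :: "'n + 'm \<Rightarrow> real"
  assumes "finite R" "finite S"
  shows "(\<Sum>k\<in>Inl ` R \<union> Inr ` S. x k) = (\<Sum>i\<in>R. x (Inl i)) + (\<Sum>j\<in>S. x (Inr j))"
proof -
  have "(\<Sum>k\<in>Inl ` R \<union> Inr ` S. x k) = (\<Sum>k\<in>Inl ` R. x k) + (\<Sum>k\<in>Inr ` S. x k)"
    using assms by (intro sum.union_disjoint) auto
  also have "\<dots> = (\<Sum>i\<in>R. x (Inl i)) + (\<Sum>j\<in>S. x (Inr j))"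
    by (simp add: sum.reindex)
  finally show ?thesis .
qed

lemma core_nonempty: "mrs_core N M (mrs_value M w c p qstar qbar) \<noteq> {}"
proof -
  define v where "v = mrs_value M w c p qstar qbar"
  define \<phi> where "\<phi> \<pi> = (\<Sum>i\<in>N. hv i \<pi>)" for \<pi>
  define P where "P = (\<Sum>i\<in>N. \<bar>p i 0\<bar>)"
  have P0: "0 \<le> P" unfolding P_def by (rule sum_nonneg) simp
  have \<phi>P: "\<phi> P = 0"
  proof -
    have "hv i P = 0" if i: "i \<in> N" for i
    proof (rule hv_large[OF i])
      show "\<bar>p i 0\<bar> \<le> P" unfolding P_def
        using i finN by (intro member_le_sum) auto
    qed
    then show ?thesis unfolding \<phi>_def by simp
  qed
  have v0: "0 \<le> v N M"
  proof (cases "N = {}")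
    case True then show ?thesis unfolding v_def mrs_value_def by simp
  next
    case False
    have "val N M (\<lambda>i j. 0) = 0" unfolding val_def profit_NM by simp
    moreover have "val N M (\<lambda>i j. 0) \<le> v N M" unfolding v_def v_Sup[OF False]
      by (rule cSUP_upper[OF feas0 val_bdd]) auto
    ultimately show ?thesis by simp
  qed
  have v\<phi>: "v N M \<le> \<phi> 0"
  proof (cases "N = {}")
    case True then show ?thesis unfolding v_def mrs_value_def \<phi>_def by simp
  next
    case False
    show ?thesis unfolding v_def v_Sup[OF False]
    proof (rule cSUP_least)
      show "FS N \<noteq> {}" using feas0[of N] by auto
    next
      fix q assume q: "q \<in> FS N"
      have "val N M q \<le> (\<Sum>i\<in>N. p i (sum (q i) M) * sum (q i) M)"
        using val_le[OF order_refl order_refl q] cmQ_nonneg[OF q] by linarith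
      also have "\<dots> = (\<Sum>i\<in>N. gv i 0 (q i))" unfolding gv_def by simp
      also have "\<dots> \<le> \<phi> 0" unfolding \<phi>_def
      proof (rule sum_mono)
        fix i assume i: "i \<in> N"
        have "q i \<in> rowset i" using feas_row[of N q i] q i unfolding FS_def by blast
        then show "gv i 0 (q i) \<le> hv i 0" using gv_le_hv[of i] i by blast
      qed
      finally show "val N M q \<le> \<phi> 0" .
    qed
  qed
  have cont: "continuous_on {0..P} \<phi>"
    unfolding \<phi>_def by (intro continuous_on_sum) (use hv_cont in blast)
  obtain \<pi>0 where \<pi>0: "\<phi> \<pi>0 = v N M"
    using IVT2'[of \<phi> P "v N M" 0, OF _ v\<phi> P0 cont] \<phi>P v0 by auto
  define x :: "'n + 'm \<Rightarrow> real" where "x = case_sum (\<lambda>i. hv i \<pi>0) (\<lambda>j. 0::real)"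
  have xs: "(\<Sum>k\<in>Inl ` R \<union> Inr ` S. x k) = (\<Sum>i\<in>R. hv i \<pi>0)"
    if "R \<subseteq> N" "S \<subseteq> M" for R S
  proof -
    have "finite R" "finite S" using that finN finM finite_subset by blast+
    then show ?thesis using sum_split[of R S x] unfolding x_def by simp
  qed
  have "x \<in> mrs_core N M v"
    unfolding mrs_core_def mem_Collect_eq
  proof (intro conjI allI impI)
    show "(\<Sum>k\<in>Inl ` N \<union> Inr ` M. x k) = v N M" using xs[OF order_refl order_refl] \<pi>0 \<phi>_def by simp
  next
    fix R S assume RS: "R \<subseteq> N \<and> S \<subseteq> M"
    show "v R S \<le> (\<Sum>k\<in>Inl ` R \<union> Inr ` S. x k)"
    proof (cases "R = {}")
      case True
      then show ?thesis using xs[of R S] RS unfolding v_def mrs_value_def by simp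
    next
      case False
      have "\<not> (v R S > (\<Sum>i\<in>R. hv i \<pi>0))"
      proof
        assume "v R S > (\<Sum>i\<in>R. hv i \<pi>0)"
        then have "v N M > \<phi> \<pi>0" using key[of R S \<pi>0] RS False unfolding v_def \<phi>_def by blast
        then show False using \<pi>0 by simp
      qed
      then show ?thesis using xs[of R S] RS by simp
    qed
  qed
  then show ?thesis unfolding v_def by blast
qed

end

theorem theorem1:
  fixes N :: "'n set" and M :: "'m set"
    and w c :: "'m \<Rightarrow> real \<Rightarrow> real" and p :: "'n \<Rightarrow> real \<Rightarrow> real"
    and qstar :: "'n \<Rightarrow> real" and qbar :: "'n \<Rightarrow> 'm \<Rightarrow> real"
  assumes "mrs_situation N M w c p qstar qbar"
  shows "mrs_core N M (mrs_value M w c p qstar qbar) \<noteq> {}"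
  using mrs.core_nonempty[OF mrs.intro[OF assms]] .

end
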